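(* Let $p,q$ be positive integers, $e\in\mathbb{R}^p$ the vector of all ones, and let $(z,w)\in\mathbb{R}^p\times\mathbb{R}^q$ satisfy $z^+\not\ge\|w\|e$ and $\langle z^-,e\rangle<\|w\|$. Assume further that $0<\alpha<1$ and $\langle e,|z|\rangle<\alpha(1+\alpha)^{-1}\|w\|$. For $\lambda\ge0$ let $N(\lambda):=\operatorname{diag}\big(-\operatorname{sgn}([(\lambda+1)z-\|w\|e]^-)\big)$, and given $\lambda_0>0$ define $\{\lambda_k\}$ by $N_k:=N(\lambda_k)$ and $$\big[-\|w\|+\langle e,N_kz\rangle\big]\lambda_{k+1}=-\langle e,N_k[z-\|w\|e]\rangle,\qquad k=0,1,\ldots.$$ Then for any $\lambda_0>0$ the sequence $\{\lambda_k\}$ is well defined and converges linearly to the unique solution $\lambda_*$ of $\lambda\|w\|=\langle e,[(\lambda+1)z-\|w\|e]^-\rangle$, namely $$|\lambda_*-\lambda_{k+1}|\le\alpha|\lambda_*-\lambda_k|,\qquad k=0,1,\ldots.$$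
   Context: For $\alpha\in\mathbb{R}$, $\alpha^+:=\max(\alpha,0)$ and $\alpha^-:=\max(-\alpha,0)$; for vectors, $z^+$, $z^-$, $|z|$ and $\operatorname{sgn}(z)$ are taken componentwise (with $\operatorname{sgn}(0)=0$), and $\operatorname{diag}(z)$ is the diagonal matrix with diagonal $z_1,\dots,z_p$. The order $\ge$ is componentwise; $z^+\not\ge\|w\|e$ means that $z^+\ge\|w\|e$ fails. *)

theory Defs
  imports "HOL-Analysis.Analysis"
begin

definition ones :: "real^'n" where
  "ones = (\<chi> i. 1)"

definition vpos :: "real^'n \<Rightarrow> real^'n" where
  "vpos z = (\<chi> i. max (z$i) 0)"

definition vneg :: "real^'n \<Rightarrow> real^'n" where
  "vneg z = (\<chi> i. max (- (z$i)) 0)"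

definition vabs :: "real^'n \<Rightarrow> real^'n" where
  "vabs z = (\<chi> i. \<bar>z$i\<bar>)"

definition vsgn :: "real^'n \<Rightarrow> real^'n" where
  "vsgn z = (\<chi> i. sgn (z$i))"

definition diagm :: "real^'n \<Rightarrow> real^'n^'n" where
  "diagm d = (\<chi> i j. if i = j then d$i else 0)"

definition Nmat :: "real^'n \<Rightarrow> real \<Rightarrow> real \<Rightarrow> real^'n^'n" where
  "Nmat z r lam = diagm (- vsgn (vneg ((lam + 1) *\<^sub>R z - r *\<^sub>R ones)))"

definition coef :: "real^'n \<Rightarrow> real \<Rightarrow> real \<Rightarrow> real" where
  "coef z r lam = - r + ones \<bullet> (Nmat z r lam *v z)"

definition rhs :: "real^'n \<Rightarrow> real \<Rightarrow> real \<Rightarrow> real" where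
  "rhs z r lam = - (ones \<bullet> (Nmat z r lam *v (z - r *\<^sub>R ones)))"

text \<open>The iteration; well-definedness is asserted separately (coef \<noteq> 0).\<close>
primrec lam_seq :: "real^'n \<Rightarrow> real \<Rightarrow> real \<Rightarrow> nat \<Rightarrow> real" where
  "lam_seq z r l0 0 = l0"
| "lam_seq z r l0 (Suc k) = rhs z r (lam_seq z r l0 k) / coef z r (lam_seq z r l0 k)"

end

theory Submission imports Defs begin
lemma Nmat_mult: "(Nmat z r lam *v v) $ i = (if r - (lam+1)*z$i > 0 then - v$i else 0)"
  unfolding Nmat_def diagm_def matrix_vector_mult_def vsgn_def vneg_def ones_def
  by (auto simp: if_distrib[where f="\<lambda>x. x * _"] sum.delta cong: if_cong simp: sgn_if)
lemma if_neg0: "(if c then - (x::real) else 0) = - (if c then x else 0)" by simp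
lemma comp1: "(z - r *\<^sub>R ones) $ i = z$i - (r::real)" by (simp add: ones_def)
lemma coef_eq: "coef z r lam = - r - (\<Sum>i\<in>UNIV. if r - (lam+1)*z$i > 0 then z$i else 0)"
  unfolding coef_def inner_vec_def by (simp add: Nmat_mult ones_def if_neg0 sum_negf)
lemma rhs_eq: "rhs z r lam = (\<Sum>i\<in>UNIV. if r - (lam+1)*z$i > 0 then z$i - r else 0)"
  unfolding rhs_def inner_vec_def by (simp only: Nmat_mult comp1 if_neg0 sum_negf) (simp add: ones_def sum_negf)
lemma F_eq: "ones \<bullet> vneg ((lam+1) *\<^sub>R z - r *\<^sub>R ones) = (\<Sum>i\<in>UNIV. max (r - (lam+1)*z$i) 0)"
  unfolding inner_vec_def vneg_def ones_def by simp
lemma s_eq: "ones \<bullet> vabs z = (\<Sum>i\<in>UNIV. \<bar>z$i\<bar>)"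
  unfolding inner_vec_def vabs_def ones_def by simp

definition FF :: "real^'p \<Rightarrow> real \<Rightarrow> real \<Rightarrow> real" where
  "FF z r mu = (\<Sum>i\<in>UNIV. max (r - (mu+1)*z$i) 0)"
definition HH :: "real^'p \<Rightarrow> real \<Rightarrow> real \<Rightarrow> real \<Rightarrow> real" where
  "HH z r lam mu = (\<Sum>i\<in>UNIV. if (lam+1)*z$i < r then r - (mu+1)*z$i else 0)"
definition PP :: "real^'p \<Rightarrow> real \<Rightarrow> real \<Rightarrow> real" where
  "PP z r lam = (\<Sum>i\<in>UNIV. if (lam+1)*z$i < r then z$i else 0)"

lemma PP_bound: "\<bar>PP z r lam\<bar> \<le> (\<Sum>i\<in>UNIV. \<bar>z$i\<bar>)"
proof -
  have "\<bar>PP z r lam\<bar> \<le> (\<Sum>i\<in>UNIV. \<bar>if (lam+1)*z$i < r then z$i else 0\<bar>)"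
    unfolding PP_def by (rule sum_abs)
  also have "\<dots> \<le> (\<Sum>i\<in>UNIV. \<bar>z$i\<bar>)" by (rule sum_mono) auto
  finally show ?thesis .
qed

lemma FF_lip: "\<bar>FF z r mu - FF z r nu\<bar> \<le> (\<Sum>i\<in>UNIV. \<bar>z$i\<bar>) * \<bar>mu - nu\<bar>"
proof -
  have "\<bar>FF z r mu - FF z r nu\<bar> = \<bar>\<Sum>i\<in>UNIV. max (r - (mu+1)*z$i) 0 - max (r - (nu+1)*z$i) 0\<bar>"
    unfolding FF_def by (simp add: sum_subtractf)
  also have "\<dots> \<le> (\<Sum>i\<in>UNIV. \<bar>max (r - (mu+1)*z$i) 0 - max (r - (nu+1)*z$i) 0\<bar>)" by (rule sum_abs)
  also have "\<dots> \<le> (\<Sum>i\<in>UNIV. \<bar>z$i\<bar> * \<bar>mu - nu\<bar>)"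
  proof (rule sum_mono)
    fix i
    have "\<bar>(r - (mu+1)*z$i) - (r - (nu+1)*z$i)\<bar> = \<bar>z$i\<bar> * \<bar>mu - nu\<bar>"
      by (simp add: algebra_simps abs_mult[symmetric])
    then show "\<bar>max (r - (mu+1)*z$i) 0 - max (r - (nu+1)*z$i) 0\<bar> \<le> \<bar>z$i\<bar> * \<bar>mu - nu\<bar>"
      by linarith
  qed
  also have "\<dots> = (\<Sum>i\<in>UNIV. \<bar>z$i\<bar>) * \<bar>mu - nu\<bar>" by (simp add: sum_distrib_right)
  finally show ?thesis .
qed

lemma FH_bound: "0 \<le> FF z r mu - HH z r lam mu \<and> FF z r mu - HH z r lam mu \<le> (\<Sum>i\<in>UNIV. \<bar>z$i\<bar>) * \<bar>mu - lam\<bar>"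
proof -
  have eq: "FF z r mu - HH z r lam mu = (\<Sum>i\<in>UNIV. max (r - (mu+1)*z$i) 0 - (if (lam+1)*z$i < r then r - (mu+1)*z$i else 0))"
    unfolding FF_def HH_def by (simp add: sum_subtractf)
  have t: "0 \<le> max (r - (mu+1)*z$i) 0 - (if (lam+1)*z$i < r then r - (mu+1)*z$i else 0) \<and>
       max (r - (mu+1)*z$i) 0 - (if (lam+1)*z$i < r then r - (mu+1)*z$i else 0) \<le> \<bar>z$i\<bar> * \<bar>mu - lam\<bar>" for i
  proof -
    have "\<bar>(r - (mu+1)*z$i) - (r - (lam+1)*z$i)\<bar> = \<bar>z$i\<bar> * \<bar>mu - lam\<bar>"
      by (simp add: algebra_simps abs_mult[symmetric])
    then show ?thesis by (auto split: if_splits)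
  qed
  have "0 \<le> FF z r mu - HH z r lam mu" unfolding eq by (rule sum_nonneg) (use t in blast)
  moreover have "FF z r mu - HH z r lam mu \<le> (\<Sum>i\<in>UNIV. \<bar>z$i\<bar> * \<bar>mu - lam\<bar>)"
    unfolding eq by (rule sum_mono) (use t in blast)
  ultimately show ?thesis by (simp add: sum_distrib_right)
qed

lemma HH_lin: "HH z r lam mu = HH z r lam 0 - mu * PP z r lam"
proof -
  have "HH z r lam mu = (\<Sum>i\<in>UNIV. (if (lam+1)*z$i < r then r - (0+1)*z$i else 0) - mu * (if (lam+1)*z$i < r then z$i else 0))"
    unfolding HH_def by (rule sum.cong) (auto simp: algebra_simps)
  also have "\<dots> = HH z r lam 0 - mu * PP z r lam"
    unfolding HH_def PP_def by (simp only: sum_subtractf sum_distrib_left)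
  finally show ?thesis .
qed

lemma HH0_nonneg: assumes "\<And>i. z$i < r" shows "0 \<le> HH z r lam 0"
  unfolding HH_def by (rule sum_nonneg) (use assms in \<open>auto simp: less_imp_le\<close>)

lemma coef_PP: "coef z r lam = - r - PP z r lam"
  unfolding coef_eq PP_def by simp
lemma rhs_HH: "rhs z r lam = - HH z r lam 0"
  unfolding rhs_eq HH_def sum_negf[symmetric] by (rule sum.cong) auto
lemma F_FF: "ones \<bullet> vneg ((lam+1) *\<^sub>R z - r *\<^sub>R ones) = FF z r lam"
  unfolding F_eq FF_def ..


lemma step_facts:
  fixes z :: "real^'p" and r lam :: real
  assumes sr: "(\<Sum>i\<in>UNIV. \<bar>z$i\<bar>) < r"
  defines "lam' \<equiv> rhs z r lam / coef z r lam"
  shows "coef z r lam \<noteq> 0" "0 \<le> lam'" "lam' * r = HH z r lam lam'"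
    "lam' * (r + PP z r lam) = HH z r lam 0" "r + PP z r lam > 0"
proof -
  let ?s = "\<Sum>i\<in>UNIV. \<bar>z$i\<bar>"
  have P: "\<bar>PP z r lam\<bar> \<le> ?s" by (rule PP_bound)
  show pos: "r + PP z r lam > 0" using P sr by linarith
  have cP: "coef z r lam = - (r + PP z r lam)" unfolding coef_PP by simp
  show "coef z r lam \<noteq> 0" using pos unfolding cP by linarith
  have zi: "z$i < r" for i
  proof -
    have "\<bar>z$i\<bar> \<le> ?s" by (rule member_le_sum) auto
    then show ?thesis using sr by linarith
  qed
  have l: "lam' = HH z r lam 0 / (r + PP z r lam)"
    unfolding lam'_def cP rhs_HH by (rule minus_divide_divide)
  show "0 \<le> lam'" unfolding l using HH0_nonneg[of z r lam] zi pos by simp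
  show e: "lam' * (r + PP z r lam) = HH z r lam 0" unfolding l using pos by simp
  show "lam' * r = HH z r lam lam'" using e HH_lin[of z r lam lam'] by (simp add: algebra_simps)
qed

theorem proposition4:
  fixes z :: "real^'p" and w :: "real^'q" and \<alpha> l0 :: real
  assumes "\<not> (norm w *\<^sub>R ones \<le> vpos z)"
    and "vneg z \<bullet> ones < norm w"
    and "0 < \<alpha>" and "\<alpha> < 1"
    and "ones \<bullet> vabs z < \<alpha> / (1 + \<alpha>) * norm w"
    and "0 < l0"
  shows "(\<forall>k. 0 \<le> lam_seq z (norm w) l0 k \<and> coef z (norm w) (lam_seq z (norm w) l0 k) \<noteq> 0)
    \<and> (\<exists>ls. ls * norm w = ones \<bullet> vneg ((ls + 1) *\<^sub>R z - norm w *\<^sub>R ones)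
         \<and> (\<forall>\<mu>. \<mu> * norm w = ones \<bullet> vneg ((\<mu> + 1) *\<^sub>R z - norm w *\<^sub>R ones) \<longrightarrow> \<mu> = ls)
         \<and> lam_seq z (norm w) l0 \<longlonglongrightarrow> ls
         \<and> (\<forall>k. \<bar>ls - lam_seq z (norm w) l0 (Suc k)\<bar> \<le> \<alpha> * \<bar>ls - lam_seq z (norm w) l0 k\<bar>))"
proof -
  define r where "r = norm w"
  define s where "s = (\<Sum>i\<in>UNIV. \<bar>z$i\<bar>)"
  define L where "L = lam_seq z r l0"
  have s_nn: "0 \<le> s" unfolding s_def by (rule sum_nonneg) auto
  have hs: "s < \<alpha> / (1 + \<alpha>) * r" using assms(5) unfolding s_def r_def s_eq .
  have r0: "r > 0"
  proof (rule ccontr)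
    assume "\<not> r > 0"
    then have "r = 0" unfolding r_def by simp
    then have "\<alpha> / (1 + \<alpha>) * r \<le> 0" by simp
    then show False using hs s_nn by linarith
  qed
  have hs2: "s * (1 + \<alpha>) < \<alpha> * r" using hs assms(3) by (simp add: field_simps)
  have "\<alpha> * r < (1 + \<alpha>) * r" using r0 by simp
  then have "s * (1 + \<alpha>) < r * (1 + \<alpha>)" using hs2 by (simp add: algebra_simps)
  then have sr: "s < r" using assms(3) by (simp add: mult_less_cancel_right_pos)
  have sa: "s \<le> \<alpha> * (r - s)" using hs2 by (simp add: algebra_simps)
  have srs: "(\<Sum>i\<in>UNIV. \<bar>z$i\<bar>) < r" using sr s_def by simp
  note SF = step_facts[OF srs]
  have Lsuc: "L (Suc k) = rhs z r (L k) / coef z r (L k)" for k unfolding L_def by simp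
  have part1: "\<forall>k. 0 \<le> L k \<and> coef z r (L k) \<noteq> 0"
  proof
    fix k show "0 \<le> L k \<and> coef z r (L k) \<noteq> 0"
    proof (cases k)
      case 0 then show ?thesis using assms(6) SF(1) by (simp add: L_def)
    next
      case (Suc m) then show ?thesis using SF(1,2) Lsuc by simp
    qed
  qed
  define g where "g mu = mu * r - FF z r mu" for mu
  have FL: "\<bar>FF z r mu - FF z r nu\<bar> \<le> s * \<bar>mu - nu\<bar>" for mu nu
    using FF_lip[of z r mu nu] s_def by simp
  define M where "M = FF z r 0 / (r - s)"
  have F0: "0 \<le> FF z r 0" unfolding FF_def by (rule sum_nonneg) auto
  have M0: "0 \<le> M" unfolding M_def using F0 sr by simp
  have gM: "0 \<le> g M"
  proof -
    have "FF z r M \<le> FF z r 0 + s * M" using FL[of M 0] M0 by simp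
    moreover have "M * (r - s) = FF z r 0" unfolding M_def using sr by simp
    ultimately show ?thesis unfolding g_def by (simp add: algebra_simps)
  qed
  have g0: "g 0 \<le> 0" unfolding g_def using F0 by simp
  have cont: "isCont g x" for x unfolding g_def FF_def by (intro continuous_intros)
  obtain ls where ls: "g ls = 0" using IVT[of g 0 0 M] g0 gM M0 cont by blast
  have lsF: "ls * r = FF z r ls" using ls unfolding g_def by simp
  have uniq: "mu = ls" if "mu * r = FF z r mu" for mu
  proof -
    have "(mu - ls) * r = FF z r mu - FF z r ls" using that lsF by (simp add: left_diff_distrib)
    then have "\<bar>mu - ls\<bar> * r = \<bar>FF z r mu - FF z r ls\<bar>" using r0 by (metis abs_mult abs_of_pos)
    also have "\<dots> \<le> s * \<bar>mu - ls\<bar>" by (rule FL)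
    finally have "\<bar>mu - ls\<bar> * (r - s) \<le> 0" by (simp add: algebra_simps)
    then show ?thesis using sr by (simp add: mult_le_0_iff)
  qed
  have contr: "\<bar>ls - rhs z r lam / coef z r lam\<bar> \<le> \<alpha> * \<bar>ls - lam\<bar>" for lam
  proof -
    define lam' where "lam' = rhs z r lam / coef z r lam"
    define D where "D = r + PP z r lam"
    have D0: "D > 0" unfolding D_def using SF(5) .
    have PB: "\<bar>PP z r lam\<bar> \<le> s" using PP_bound s_def by simp
    have Ds: "r - s \<le> D" unfolding D_def using PB by linarith
    have e1: "lam' * D = HH z r lam 0" unfolding D_def lam'_def using SF(4) .
    have "D * (lam' - ls) = HH z r lam ls - ls * r"
      using e1 HH_lin[of z r lam ls] unfolding D_def by (simp add: algebra_simps)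
    also have "\<dots> = HH z r lam ls - FF z r ls" using lsF by simp
    finally have "D * \<bar>lam' - ls\<bar> = \<bar>HH z r lam ls - FF z r ls\<bar>" using D0
      by (metis abs_mult abs_of_pos)
    then have e2: "D * \<bar>lam' - ls\<bar> = \<bar>FF z r ls - HH z r lam ls\<bar>" by (simp add: abs_minus_commute)
    have "\<bar>FF z r ls - HH z r lam ls\<bar> \<le> s * \<bar>ls - lam\<bar>" using FH_bound[of z r ls lam] s_def by simp
    then have "D * \<bar>lam' - ls\<bar> \<le> s * \<bar>ls - lam\<bar>" using e2 by simp
    moreover have "s * \<bar>ls - lam\<bar> \<le> \<alpha> * (r - s) * \<bar>ls - lam\<bar>" using sa by (simp add: mult_right_mono)
    moreover have "\<alpha> * (r - s) * \<bar>ls - lam\<bar> \<le> \<alpha> * D * \<bar>ls - lam\<bar>"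
      using Ds assms(3) by (simp add: mult_right_mono mult_left_mono)
    ultimately have "D * \<bar>lam' - ls\<bar> \<le> D * (\<alpha> * \<bar>ls - lam\<bar>)" by (simp add: algebra_simps)
    then have "\<bar>lam' - ls\<bar> \<le> \<alpha> * \<bar>ls - lam\<bar>" using D0 by simp
    then show ?thesis unfolding lam'_def by (simp add: abs_minus_commute)
  qed
  have rate: "\<forall>k. \<bar>ls - L (Suc k)\<bar> \<le> \<alpha> * \<bar>ls - L k\<bar>" using contr Lsuc by simp
  have geo: "\<bar>ls - L k\<bar> \<le> \<alpha> ^ k * \<bar>ls - l0\<bar>" for k
  proof (induction k)
    case 0 then show ?case by (simp add: L_def)
  next
    case (Suc k)
    have "\<bar>ls - L (Suc k)\<bar> \<le> \<alpha> * \<bar>ls - L k\<bar>" using rate by blast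
    also have "\<dots> \<le> \<alpha> * (\<alpha> ^ k * \<bar>ls - l0\<bar>)" using Suc assms(3) by (simp add: mult_left_mono)
    finally show ?case by simp
  qed
  have "(\<lambda>k. \<alpha> ^ k * \<bar>ls - l0\<bar>) \<longlonglongrightarrow> 0"
    using LIMSEQ_power_zero[of \<alpha>] assms(3,4) by (auto intro: tendsto_mult_left_zero)
  then have "(\<lambda>k. L k - ls) \<longlonglongrightarrow> 0"
    by (rule Lim_null_comparison[rotated]) (use geo in \<open>auto simp: abs_minus_commute\<close>)
  then have conv: "L \<longlonglongrightarrow> ls" by (simp add: LIM_zero_cancel)
  show ?thesis
    using part1 lsF uniq conv rate unfolding L_def r_def F_FF by blast
qed

end
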